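(* Let $p_1<\dots<p_m$ be real numbers with $m\ge3$, let $M=\max_{i,j}|p_i-p_j|$, and define $M_0^2=\sum_{1\le i<j\le m}(p_j-p_i)^2$ and $M_{k+1}^2=\big(\sum_{1\le i<j\le m}\frac{1}{(p_i-p_j)^2-M_{k}^2}\big)^{-1}+M_{k}^2$ for $k\ge0$. Then for every $k\ge0$, $$0<\frac{2}{m(m-1)}\Big(1-\frac{M^2}{M_k^2}\Big)<1-\frac{M_{k+1}^2}{M_k^2}<1-\frac{M^2}{M_k^2}.$$ *)

theory Defs
  imports Complex_Main
begin

text \<open>Points p 0 < ... < p (m-1) (0-indexed). Msq p m k is M_k^2.\<close>

fun Msq :: "(nat \<Rightarrow> real) \<Rightarrow> nat \<Rightarrow> nat \<Rightarrow> real" where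
  "Msq p m 0 = (\<Sum>j<m. \<Sum>i<j. (p j - p i)^2)"
| "Msq p m (Suc k) =
     inverse (\<Sum>j<m. \<Sum>i<j. 1 / ((p i - p j)^2 - Msq p m k)) + Msq p m k"

definition maxdist :: "(nat \<Rightarrow> real) \<Rightarrow> nat \<Rightarrow> real" where
  "maxdist p m = Max {\<bar>p i - p j\<bar> | i j. i < m \<and> j < m}"

end

theory Submission
  imports Defs
begin

lemma key_sums:
  fixes g :: "'a \<Rightarrow> real"
  assumes fin: "finite P" and le: "\<And>z. z \<in> P \<Longrightarrow> g z \<le> M2"
    and a: "a \<in> P" "g a = M2" and b: "b \<in> P" "g b < M2" and x: "x > M2"
  shows "(\<Sum>z\<in>P. 1 / (x - g z)) > 1 / (x - M2)"
    and "(\<Sum>z\<in>P. 1 / (x - g z)) * (x - M2) < real (card P)"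
proof -
  have pos: "\<And>z. z \<in> P \<Longrightarrow> 0 < 1 / (x - g z)" using le x by force
  have ba: "b \<noteq> a" using a b by auto
  have "(\<Sum>z\<in>P. 1 / (x - g z)) = 1/(x - g a) + (\<Sum>z\<in>P-{a}. 1 / (x - g z))"
    using fin a by (simp add: sum.remove)
  moreover have "0 < (\<Sum>z\<in>P-{a}. 1 / (x - g z))"
    apply (rule sum_pos2[where i=b]) using fin b ba pos by (auto intro: less_imp_le)
  ultimately show "(\<Sum>z\<in>P. 1 / (x - g z)) > 1 / (x - M2)" using a by simp
  have "(\<Sum>z\<in>P. 1 / (x - g z)) * (x - M2) = (\<Sum>z\<in>P. (x - M2) / (x - g z))"
    by (simp add: sum_distrib_right)
  also have "\<dots> < (\<Sum>z\<in>P. 1)"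
  proof (rule sum_strict_mono_ex1[OF fin])
    show "\<forall>z\<in>P. (x - M2) / (x - g z) \<le> 1"
      using le x by (auto simp: divide_le_eq_1 dest!: le)
    show "\<exists>z\<in>P. (x - M2) / (x - g z) < 1"
      using b x by (intro bexI[of _ b]) (auto simp: divide_less_eq_1)
  qed
  finally show "(\<Sum>z\<in>P. 1 / (x - g z)) * (x - M2) < real (card P)" by simp
qed

lemma gauss_real: "(\<Sum>j<m. real j) = real m * (real m - 1) / 2"
  by (induction m) (auto simp: field_simps)

theorem mainTheorem9:
  fixes p :: "nat \<Rightarrow> real" and m k :: nat
  assumes "m \<ge> 3"
    and "\<And>i j. i < j \<Longrightarrow> j < m \<Longrightarrow> p i < p j"
  shows "0 < 2 / (real m * (real m - 1)) * (1 - (maxdist p m)^2 / Msq p m k)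
       \<and> 2 / (real m * (real m - 1)) * (1 - (maxdist p m)^2 / Msq p m k)
           < 1 - Msq p m (Suc k) / Msq p m k
       \<and> 1 - Msq p m (Suc k) / Msq p m k < 1 - (maxdist p m)^2 / Msq p m k"
proof -
  note m = assms(1)
  have mono: "\<And>i j. i \<le> j \<Longrightarrow> j < m \<Longrightarrow> p i \<le> p j"
    using assms(2) by (fastforce simp: le_less)
  define D where "D = p (m-1) - p 0"
  have Dpos: "D > 0" unfolding D_def using assms(2)[of 0 "m-1"] m by auto
  have md: "maxdist p m = D"
    unfolding maxdist_def
  proof (rule Max_eqI)
    have "{\<bar>p i - p j\<bar> | i j. i < m \<and> j < m} = (\<lambda>(i,j). \<bar>p i - p j\<bar>) ` ({..<m}\<times>{..<m})"
      by auto
    then show "finite {\<bar>p i - p j\<bar> | i j. i < m \<and> j < m}" by simp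
    show "\<And>y. y \<in> {\<bar>p i - p j\<bar> | i j. i < m \<and> j < m} \<Longrightarrow> y \<le> D"
    proof -
      fix y assume "y \<in> {\<bar>p i - p j\<bar> | i j. i < m \<and> j < m}"
      then obtain i j where ij: "i<m" "j<m" "y = \<bar>p i - p j\<bar>" by auto
      have "p 0 \<le> p i" "p 0 \<le> p j" "p i \<le> p (m-1)" "p j \<le> p (m-1)"
        using mono ij by auto
      then show "y \<le> D" unfolding D_def ij by auto
    qed
    show "D \<in> {\<bar>p i - p j\<bar> | i j. i < m \<and> j < m}"
      unfolding D_def using m Dpos D_def by (intro CollectI exI[of _ "m-1"] exI[of _ 0]) auto
  qed
  define P where "P = Sigma {..<m} (\<lambda>j. {..<j})"
  define g where "g = (\<lambda>(j,i). (p j - p i)^2)"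
  have finP: "finite P" unfolding P_def by simp
  have cardP: "real (card P) = real m * (real m - 1) / 2"
  proof -
    have "card P = (\<Sum>j<m. card {..<j})" unfolding P_def by (simp add: card_SigmaI)
    then have "real (card P) = (\<Sum>j<m. real j)" by simp
    then show ?thesis using gauss_real by simp
  qed
  have cP: "real (card P) > 0"
  proof -
    have "real m * (real m - 1) > 0" using m by simp
    then show ?thesis using cardP by linarith
  qed
  have sumP: "\<And>f. (\<Sum>j<m. \<Sum>i<j. f j i) = (\<Sum>z\<in>P. case z of (j,i) \<Rightarrow> f j i)"
    unfolding P_def by (simp add: sum.Sigma)
  have gle: "\<And>z. z \<in> P \<Longrightarrow> g z \<le> D^2"
  proof -
    fix z assume "z \<in> P"
    then obtain j i where z: "z = (j,i)" "j<m" "i<j" unfolding P_def by auto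
    have "p 0 \<le> p i" "p j \<le> p (m-1)" "p i < p j" using mono assms(2) z by auto
    then have "\<bar>p j - p i\<bar> \<le> \<bar>D\<bar>" unfolding D_def by auto
    then show "g z \<le> D^2" unfolding g_def z by (simp add: abs_le_square_iff)
  qed
  have aP: "(m-1, 0) \<in> P" "g (m-1,0) = D^2" using m unfolding P_def g_def D_def by auto
  have p01: "p 0 < p 1" "p 1 < p (m-1)" using assms(2) m by auto
  have bP: "(1, 0) \<in> P" "g (1,0) < D^2" "g (1,0) > 0"
    using m p01 unfolding P_def g_def D_def by (auto intro!: power_strict_mono)
  have gpos: "\<And>z. z \<in> P \<Longrightarrow> g z \<ge> 0" unfolding g_def by auto
  define T where "T = (\<lambda>x. \<Sum>z\<in>P. 1 / (x - g z))"
  have step: "Msq p m (Suc k) = Msq p m k - 1 / T (Msq p m k)" for k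
  proof -
    have "(\<Sum>j<m. \<Sum>i<j. 1 / ((p i - p j)^2 - Msq p m k)) = (\<Sum>z\<in>P. - (1 / (Msq p m k - g z)))"
      unfolding sumP g_def by (intro sum.cong) (auto simp: power2_commute divide_simps split: prod.splits)
    also have "\<dots> = - T (Msq p m k)" unfolding T_def by (simp add: sum_negf)
    finally show ?thesis by (simp add: inverse_eq_divide)
  qed
  have big: "Msq p m k > D^2" for k
  proof (induction k)
    case 0
    have "Msq p m 0 = (\<Sum>z\<in>P. g z)" using sumP[of "\<lambda>j i. (p j - p i)^2"] unfolding g_def by simp
    also have "\<dots> = g (m-1,0) + (\<Sum>z\<in>P-{(m-1,0)}. g z)" using finP aP by (simp add: sum.remove)
    also have "\<dots> > D^2"
    proof -
      have "0 < (\<Sum>z\<in>P-{(m-1,0)}. g z)"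
        apply (rule sum_pos2[where i="(1,0)"]) using finP bP gpos m by auto
      then show ?thesis using aP by simp
    qed
    finally show ?case .
  next
    case (Suc k)
    have "T (Msq p m k) > 1 / (Msq p m k - D^2)" unfolding T_def
      by (rule key_sums(1)[OF finP gle aP bP(1,2) Suc])
    moreover have "0 < 1 / (Msq p m k - D^2)" using Suc by simp
    ultimately have "inverse (T (Msq p m k)) < inverse (1 / (Msq p m k - D^2))"
      by (intro less_imp_inverse_less)
    then have "1 / T (Msq p m k) < Msq p m k - D^2" by (simp add: inverse_eq_divide)
    then show ?case using step by simp
  qed
  let ?x = "Msq p m k"
  have x: "?x > D^2" by (rule big)
  have T1: "T ?x > 1 / (?x - D^2)" unfolding T_def by (rule key_sums(1)[OF finP gle aP bP(1,2) x])
  have T2: "T ?x * (?x - D^2) < real (card P)" unfolding T_def by (rule key_sums(2)[OF finP gle aP bP(1,2) x])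
  have xpos: "?x > 0" proof -
    have "D^2 \<ge> 0" by simp
    then show ?thesis using x by linarith
  qed
  have Tpos: "T ?x > 0" proof -
    have "1 / (?x - D^2) > 0" using x by simp
    then show ?thesis using T1 by linarith
  qed
  have e1: "1 - Msq p m (Suc k) / ?x = 1 / (?x * T ?x)" using step[of k] xpos Tpos
    by (simp add: field_simps)
  have e2: "1 - D^2 / ?x = (?x - D^2) / ?x" using xpos by (simp add: field_simps)
  have e3: "2 / (real m * (real m - 1)) = 1 / real (card P)" using cardP cP m by (simp add: field_simps)
  show ?thesis unfolding md e1 e2 e3
  proof (intro conjI)
    show "0 < 1 / real (card P) * ((?x - D^2) / ?x)" using cP x xpos by simp
    show "1 / real (card P) * ((?x - D^2) / ?x) < 1 / (?x * T ?x)"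
    proof -
      have q: "real (card P) * ?x * T ?x > 0" using cP xpos Tpos by simp
      have "1 / real (card P) * ((?x - D^2) / ?x) = (T ?x * (?x - D^2)) / (real (card P) * ?x * T ?x)"
        using cP xpos Tpos by (simp add: field_simps)
      also have "\<dots> < real (card P) / (real (card P) * ?x * T ?x)"
        by (rule divide_strict_right_mono[OF T2 q])
      also have "\<dots> = 1 / (?x * T ?x)" using cP by (simp add: field_simps)
      finally show ?thesis .
    qed
    show "1 / (?x * T ?x) < (?x - D^2) / ?x"
    proof -
      have "1 < T ?x * (?x - D^2)" using T1 x by (simp add: field_simps)
      then show ?thesis using xpos Tpos by (simp add: field_simps)
    qed
  qed
qed

end
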